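(* Let $A$ be a 2-sided residuated $\vee$-semilattice and let $F$ be a filter of $A$. Then $F$ equals the intersection of all $\vee$-prime filters of $A$ that contain $F$.
   Context: A residuated poset is a partially ordered semigroup $(A;\cdot,\le)$ with binary operations $\to,\leadsto$ such that $x\cdot y\le z$ iff $x\le y\to z$ iff $y\le x\leadsto z$. It is 2-sided if $x\cdot y\le x$ and $x\cdot y\le y$ for all $x,y$, and a residuated $\vee$-semilattice if $(A,\le)$ is a join-semilattice. A filter is a nonempty upward closed subset closed under $\cdot$. A filter $G$ is $\vee$-prime if $x\vee y\in G$ implies $x\in G$ or $y\in G$. The intersection of the empty family is $A$. *)

theory Defs
  imports Main
begin

definition residuated_poset ::
  "('a::order \<Rightarrow> 'a \<Rightarrow> 'a) \<Rightarrow> ('a \<Rightarrow> 'a \<Rightarrow> 'a) \<Rightarrow> ('a \<Rightarrow> 'a \<Rightarrow> 'a) \<Rightarrow> bool" where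
  "residuated_poset m r l \<longleftrightarrow>
     (\<forall>x y z. m (m x y) z = m x (m y z)) \<and>
     (\<forall>x y z. x \<le> y \<longrightarrow> m x z \<le> m y z \<and> m z x \<le> m z y) \<and>
     (\<forall>x y z. (m x y \<le> z \<longleftrightarrow> x \<le> r y z) \<and> (m x y \<le> z \<longleftrightarrow> y \<le> l x z))"

definition two_sided :: "('a::order \<Rightarrow> 'a \<Rightarrow> 'a) \<Rightarrow> bool" where
  "two_sided m \<longleftrightarrow> (\<forall>x y. m x y \<le> x \<and> m x y \<le> y)"

definition residuated_sup_semilattice ::
  "('a::semilattice_sup \<Rightarrow> 'a \<Rightarrow> 'a) \<Rightarrow> ('a \<Rightarrow> 'a \<Rightarrow> 'a) \<Rightarrow> ('a \<Rightarrow> 'a \<Rightarrow> 'a) \<Rightarrow> bool" where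
  "residuated_sup_semilattice m r l \<longleftrightarrow> residuated_poset m r l"

definition res_filter :: "('a::order \<Rightarrow> 'a \<Rightarrow> 'a) \<Rightarrow> 'a set \<Rightarrow> bool" where
  "res_filter m F \<longleftrightarrow> F \<noteq> {} \<and> (\<forall>x y. x \<in> F \<and> x \<le> y \<longrightarrow> y \<in> F) \<and>
     (\<forall>x y. x \<in> F \<and> y \<in> F \<longrightarrow> m x y \<in> F)"

definition sup_prime :: "('a::semilattice_sup) set \<Rightarrow> bool" where
  "sup_prime G \<longleftrightarrow> (\<forall>x y. sup x y \<in> G \<longrightarrow> x \<in> G \<or> y \<in> G)"

end

theory Submission
  imports Defs
begin

locale rsl =
  fixes m r l :: "'a::semilattice_sup \<Rightarrow> 'a \<Rightarrow> 'a"
  assumes rp: "residuated_poset m r l"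
    and ts: "two_sided m"
begin

lemma assoc: "m (m x y) z = m x (m y z)"
  using rp unfolding residuated_poset_def by blast

lemma mono1: "x \<le> y \<Longrightarrow> m x z \<le> m y z"
  using rp unfolding residuated_poset_def by blast

lemma mono2: "x \<le> y \<Longrightarrow> m z x \<le> m z y"
  using rp unfolding residuated_poset_def by blast

lemma resr: "m x y \<le> z \<longleftrightarrow> x \<le> r y z"
  using rp unfolding residuated_poset_def by blast

lemma resl: "m x y \<le> z \<longleftrightarrow> y \<le> l x z"
  using rp unfolding residuated_poset_def by blast

lemma le1: "m x y \<le> x" and le2: "m x y \<le> y"
  using ts unfolding two_sided_def by auto

lemma distl: "m (sup x y) z = sup (m x z) (m y z)"
proof (rule order.antisym)
  show "sup (m x z) (m y z) \<le> m (sup x y) z"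
    by (simp add: mono1)
  have "x \<le> r z (sup (m x z) (m y z))" "y \<le> r z (sup (m x z) (m y z))"
    by (simp_all add: resr[symmetric])
  then have "sup x y \<le> r z (sup (m x z) (m y z))" by simp
  then show "m (sup x y) z \<le> sup (m x z) (m y z)" using resr by blast
qed

lemma distr: "m z (sup x y) = sup (m z x) (m z y)"
proof (rule order.antisym)
  show "sup (m z x) (m z y) \<le> m z (sup x y)"
    by (simp add: mono2)
  have "x \<le> l z (sup (m z x) (m z y))" "y \<le> l z (sup (m z x) (m z y))"
    by (simp_all add: resl[symmetric])
  then have "sup x y \<le> l z (sup (m z x) (m z y))" by simp
  then show "m z (sup x y) \<le> sup (m z x) (m z y)" using resl by blast
qed

fun pw :: "'a \<Rightarrow> nat \<Rightarrow> 'a" where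
  "pw x 0 = x"
| "pw x (Suc n) = m x (pw x n)"

lemma pw_mono: "x \<le> y \<Longrightarrow> pw x n \<le> pw y n"
proof (induction n)
  case (Suc n)
  then have "m x (pw x n) \<le> m y (pw x n)" by (simp add: mono1)
  also have "\<dots> \<le> m y (pw y n)" using Suc by (simp add: mono2)
  finally show ?case by simp
qed simp

lemma pw_in: "res_filter m G \<Longrightarrow> x \<in> G \<Longrightarrow> pw x n \<in> G"
  by (induction n) (auto simp: res_filter_def)

lemma pw_add: "pw x (i + j + 1) = m (pw x i) (pw x j)"
  by (induction i) (auto simp: assoc)

lemma pw_le: "pw x n \<le> x"
  by (cases n) (auto simp: le1)

lemma key: "pw (sup p q) (i + j + 1) \<le> sup (pw p i) (pw q j)"
proof (induction "i + j" arbitrary: i j)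
  case 0
  then show ?case using le1[of "sup p q" "sup p q"] by simp
next
  case (Suc n)
  let ?s = "sup p q"
  have e: "pw ?s (i + j + 1) = sup (m p (pw ?s (Suc n))) (m q (pw ?s (Suc n)))"
    using Suc.hyps(2)[symmetric] by (simp add: distl)
  have A: "m p (pw ?s (Suc n)) \<le> sup (pw p i) (pw q j)"
  proof (cases i)
    case 0
    then show ?thesis using le1[of p "pw ?s (Suc n)"] by (auto intro: le_supI1)
  next
    case (Suc i')
    then have "pw ?s (Suc n) \<le> sup (pw p i') (pw q j)"
      using Suc.hyps(1)[of i' j] Suc.hyps(2) by simp
    then have "m p (pw ?s (Suc n)) \<le> m p (sup (pw p i') (pw q j))" by (rule mono2)
    also have "\<dots> = sup (pw p i) (m p (pw q j))" using Suc by (simp add: distr)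
    also have "\<dots> \<le> sup (pw p i) (pw q j)" using le2[of p "pw q j"] by (auto intro: le_supI2)
    finally show ?thesis .
  qed
  have B: "m q (pw ?s (Suc n)) \<le> sup (pw p i) (pw q j)"
  proof (cases j)
    case 0
    then show ?thesis using le1[of q "pw ?s (Suc n)"] by (auto intro: le_supI2)
  next
    case (Suc j')
    then have "pw ?s (Suc n) \<le> sup (pw p i) (pw q j')"
      using Suc.hyps(1)[of i j'] Suc.hyps(2) by simp
    then have "m q (pw ?s (Suc n)) \<le> m q (sup (pw p i) (pw q j'))" by (rule mono2)
    also have "\<dots> = sup (m q (pw p i)) (pw q j)" using Suc by (simp add: distr)
    also have "\<dots> \<le> sup (pw p i) (pw q j)" using le2[of q "pw p i"] by (auto intro: le_supI1)
    finally show ?thesis .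
  qed
  show ?case using A B e by simp
qed

definition gen :: "'a set \<Rightarrow> 'a \<Rightarrow> 'a set" where
  "gen G x = {z. \<exists>g\<in>G. \<exists>n. pw (m g x) n \<le> z}"

lemma gen_filter:
  assumes G: "res_filter m G"
  shows "res_filter m (gen G x)" "G \<subseteq> gen G x" "x \<in> gen G x"
proof -
  obtain g0 where g0: "g0 \<in> G" using G unfolding res_filter_def by blast
  have "x \<in> gen G x" unfolding gen_def using g0 le2[of g0 x]
    by (intro CollectI bexI[of _ g0] exI[of _ 0]) auto
  then show "x \<in> gen G x" .
  show "G \<subseteq> gen G x"
  proof
    fix g assume "g \<in> G"
    then show "g \<in> gen G x" unfolding gen_def using le1[of g x]
      by (intro CollectI bexI[of _ g] exI[of _ 0]) auto
  qed
  have up: "\<forall>z w. z \<in> gen G x \<and> z \<le> w \<longrightarrow> w \<in> gen G x"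
    unfolding gen_def by (auto intro: order_trans)
  have mul: "\<forall>z w. z \<in> gen G x \<and> w \<in> gen G x \<longrightarrow> m z w \<in> gen G x"
  proof (intro allI impI)
    fix z w assume "z \<in> gen G x \<and> w \<in> gen G x"
    then obtain g n g' k where g: "g \<in> G" "pw (m g x) n \<le> z"
      and g': "g' \<in> G" "pw (m g' x) k \<le> w" unfolding gen_def by blast
    let ?h = "m g g'"
    have h: "?h \<in> G" using G g g' unfolding res_filter_def by blast
    have "pw (m ?h x) n \<le> z"
      using g pw_mono[of "m ?h x" "m g x" n] mono1[OF le1[of g g'], of x] by auto
    moreover have "pw (m ?h x) k \<le> w"
      using g' pw_mono[of "m ?h x" "m g' x" k] mono1[OF le2[of g g'], of x] by auto
    ultimately have "m (pw (m ?h x) n) (pw (m ?h x) k) \<le> m z w"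
      by (meson mono1 mono2 order_trans)
    then have "pw (m ?h x) (n + k + 1) \<le> m z w" by (metis pw_add)
    then show "m z w \<in> gen G x" unfolding gen_def using h by blast
  qed
  show "res_filter m (gen G x)" unfolding res_filter_def using up mul \<open>x \<in> gen G x\<close> by blast
qed

lemma separate:
  assumes F: "res_filter m F" and a: "a \<notin> F"
  shows "\<exists>G. res_filter m G \<and> sup_prime G \<and> F \<subseteq> G \<and> a \<notin> G"
proof -
  let ?S = "{G. res_filter m G \<and> F \<subseteq> G \<and> a \<notin> G}"
  have "\<exists>M\<in>?S. \<forall>X\<in>?S. M \<subseteq> X \<longrightarrow> X = M"
  proof (rule subset_Zorn_nonempty)
    show "?S \<noteq> {}" using F a by blast
  next
    fix C assume C: "C \<noteq> {}" "subset.chain ?S C"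
    then have CS: "C \<subseteq> ?S" and ch: "\<forall>X\<in>C. \<forall>Y\<in>C. X \<subseteq> Y \<or> Y \<subseteq> X"
      unfolding subset.chain_def by auto
    obtain X0 where X0: "X0 \<in> C" using C by blast
    have "res_filter m (\<Union>C)"
      unfolding res_filter_def
    proof (intro conjI allI impI)
      show "\<Union>C \<noteq> {}" using X0 CS unfolding res_filter_def by blast
    next
      fix x y assume "x \<in> \<Union>C \<and> x \<le> y"
      then show "y \<in> \<Union>C" using CS unfolding res_filter_def by blast
    next
      fix x y assume "x \<in> \<Union>C \<and> y \<in> \<Union>C"
      then obtain X Y where "X \<in> C" "Y \<in> C" "x \<in> X" "y \<in> Y" by blast
      then have "(x \<in> X \<and> y \<in> X \<and> X \<in> C) \<or> (x \<in> Y \<and> y \<in> Y \<and> Y \<in> C)"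
        using ch by blast
      then show "m x y \<in> \<Union>C" using CS unfolding res_filter_def by blast
    qed
    then show "\<Union>C \<in> ?S" using CS X0 by blast
  qed
  then obtain G where GS: "G \<in> ?S" and max: "\<forall>X\<in>?S. G \<subseteq> X \<longrightarrow> X = G" by blast
  have Gf: "res_filter m G" and FG: "F \<subseteq> G" and aG: "a \<notin> G" using GS by auto
  have ingen: "a \<in> gen G x" if "x \<notin> G" for x
  proof (rule ccontr)
    assume "a \<notin> gen G x"
    then have "gen G x \<in> ?S" using gen_filter[OF Gf, of x] FG by blast
    then have "gen G x = G" using max gen_filter(2)[OF Gf, of x] by blast
    then show False using gen_filter(3)[OF Gf, of x] that by simp
  qed
  have "sup_prime G" unfolding sup_prime_def
  proof (intro allI impI, rule ccontr)
    fix x y assume xy: "sup x y \<in> G" and "\<not> (x \<in> G \<or> y \<in> G)"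
    then have "a \<in> gen G x" "a \<in> gen G y" using ingen by auto
    then obtain g n g' k where g: "g \<in> G" "pw (m g x) n \<le> a"
      and g': "g' \<in> G" "pw (m g' y) k \<le> a" unfolding gen_def by blast
    let ?h = "m g g'"
    have h: "?h \<in> G" using Gf g g' unfolding res_filter_def by blast
    have p: "pw (m ?h x) n \<le> a"
      using g pw_mono[of "m ?h x" "m g x" n] mono1[OF le1[of g g'], of x] by auto
    have q: "pw (m ?h y) k \<le> a"
      using g' pw_mono[of "m ?h y" "m g' y" k] mono1[OF le2[of g g'], of y] by auto
    have "pw (sup (m ?h x) (m ?h y)) (n + k + 1) \<le> a"
      using key[of "m ?h x" "m ?h y" n k] p q by (meson le_sup_iff order_trans)
    moreover have "sup (m ?h x) (m ?h y) \<in> G"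
      using h xy Gf unfolding distr[symmetric] res_filter_def by blast
    ultimately have "a \<in> G" using pw_in[OF Gf] Gf unfolding res_filter_def by blast
    then show False using aG by simp
  qed
  then show ?thesis using Gf FG aG by blast
qed

end

theorem corollary5p6:
  fixes m r l :: "'a::semilattice_sup \<Rightarrow> 'a \<Rightarrow> 'a" and F :: "'a set"
  assumes "residuated_sup_semilattice m r l"
    and "two_sided m"
    and "res_filter m F"
  shows "F = \<Inter> {G. res_filter m G \<and> sup_prime G \<and> F \<subseteq> G}"
proof -
  interpret rsl m r l
    using assms(1,2) by unfold_locales (auto simp: residuated_sup_semilattice_def)
  show ?thesis
  proof
    show "F \<subseteq> \<Inter> {G. res_filter m G \<and> sup_prime G \<and> F \<subseteq> G}" by blast
    show "\<Inter> {G. res_filter m G \<and> sup_prime G \<and> F \<subseteq> G} \<subseteq> F"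
    proof
      fix a assume a: "a \<in> \<Inter> {G. res_filter m G \<and> sup_prime G \<and> F \<subseteq> G}"
      show "a \<in> F"
      proof (rule ccontr)
        assume "a \<notin> F"
        then obtain G where "res_filter m G \<and> sup_prime G \<and> F \<subseteq> G \<and> a \<notin> G"
          using separate[OF assms(3)] by blast
        then show False using a by blast
      qed
    qed
  qed
qed

end
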